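(* Let $N,S,d\ge 1$, $\alpha\in(0,1)$, let $\overline{C}_1,\dots,\overline{C}_S\in\mathbb{R}^{N\times N}$ be symmetric, $\overline{A}_1,\dots,\overline{A}_S\in\mathbb{R}^{N\times d}$, and $h\in\Sigma_N$, with $D_h=\mathrm{diag}(h)$. For $w\in\Sigma_S$ set $\widetilde{C}(w) = \sum_s w_s\overline{C}_s$ and $\widetilde{A}(w)=\sum_s w_s\overline{A}_s$. Define $M_1,M_2\in\mathbb{R}^{S\times S}$ by $(M_1)_{pq} = \langle D_h\overline{C}_p, \overline{C}_q D_h\rangle_F$ and $(M_2)_{pq} = \langle D_h^{1/2}\overline{A}_p, D_h^{1/2}\overline{A}_q\rangle_F$. Then $M_1$, $M_2$ and $M_\alpha := \alpha M_1 + (1-\alpha)M_2$ are positive semi-definite, hence $\|x\|_{M_\alpha}=\sqrt{x^\top M_\alpha x}$ induces a Mahalanobis (pseudo-)distance on $\mathbb{R}^S$, and for all $w^{(1)},w^{(2)}\in\Sigma_S$, $$FGW_{2,\alpha}\big(\widetilde{C}(w^{(1)}),\widetilde{A}(w^{(1)}),\widetilde{C}(w^{(2)}),\widetilde{A}(w^{(2)}),h,h\big)\le \|w^{(1)}-w^{(2)}\|_{M_\alpha}.$$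
   Context: $\Sigma_N = \{h \in \mathbb{R}_+^N : \sum_i h_i = 1\}$; $\mathcal{U}(h,h)=\{T\in\mathbb{R}_+^{N\times N}: T\mathbf{1}_N=h,\ T^\top\mathbf{1}_N=h\}$. For symmetric $C^X,C^Y\in\mathbb{R}^{N\times N}$ and feature matrices $A^X,A^Y\in\mathbb{R}^{N\times d}$ with rows $a^X_i,a^Y_j$, the Fused Gromov–Wasserstein distance with squared Euclidean feature cost is $FGW_{2,\alpha}(C^X,A^X,C^Y,A^Y,h,h) = \big(\min_{T\in\mathcal{U}(h,h)} (1-\alpha)\sum_{i,j}\|a^X_i-a^Y_j\|_2^2T_{ij} + \alpha\sum_{i,j,k,l}(C^X_{ij}-C^Y_{kl})^2T_{ik}T_{jl}\big)^{1/2}$. $\langle A,B\rangle_F=\mathrm{tr}(A^\top B)$. *)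

theory Defs
  imports "HOL-Analysis.Analysis"
begin

text \<open>Matrices are functions on finite index types; N = CARD('n), S = CARD('s), d = CARD('d).\<close>

definition prob_simplex :: "('a::finite \<Rightarrow> real) set" where
  "prob_simplex = {h. (\<forall>i. h i \<ge> 0) \<and> (\<Sum>i\<in>UNIV. h i) = 1}"

definition couplings :: "('n::finite \<Rightarrow> real) \<Rightarrow> ('n \<Rightarrow> 'n \<Rightarrow> real) set" where
  "couplings h = {T. (\<forall>i j. T i j \<ge> 0) \<and> (\<forall>i. (\<Sum>j\<in>UNIV. T i j) = h i)
                     \<and> (\<forall>j. (\<Sum>i\<in>UNIV. T i j) = h j)}"

definition fgw_cost :: "real \<Rightarrow> ('n::finite \<Rightarrow> 'n \<Rightarrow> real) \<Rightarrow> ('n \<Rightarrow> 'd::finite \<Rightarrow> real)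
    \<Rightarrow> ('n \<Rightarrow> 'n \<Rightarrow> real) \<Rightarrow> ('n \<Rightarrow> 'd \<Rightarrow> real) \<Rightarrow> ('n \<Rightarrow> 'n \<Rightarrow> real) \<Rightarrow> real" where
  "fgw_cost \<alpha> CX AX CY AY T =
     (1 - \<alpha>) * (\<Sum>i\<in>UNIV. \<Sum>j\<in>UNIV. (\<Sum>k\<in>UNIV. (AX i k - AY j k)\<^sup>2) * T i j)
     + \<alpha> * (\<Sum>i\<in>UNIV. \<Sum>j\<in>UNIV. \<Sum>k\<in>UNIV. \<Sum>l\<in>UNIV. (CX i j - CY k l)\<^sup>2 * T i k * T j l)"

text \<open>FGW_{2,alpha}(C^X,A^X,C^Y,A^Y,h,h): square root of the minimal cost over U(h,h)
  (the minimum is attained, so it equals the infimum).\<close>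
definition FGW2 :: "real \<Rightarrow> ('n::finite \<Rightarrow> 'n \<Rightarrow> real) \<Rightarrow> ('n \<Rightarrow> 'd::finite \<Rightarrow> real)
    \<Rightarrow> ('n \<Rightarrow> 'n \<Rightarrow> real) \<Rightarrow> ('n \<Rightarrow> 'd \<Rightarrow> real) \<Rightarrow> ('n \<Rightarrow> real) \<Rightarrow> real" where
  "FGW2 \<alpha> CX AX CY AY h = sqrt (Inf (fgw_cost \<alpha> CX AX CY AY ` couplings h))"

definition frob :: "('a::finite \<Rightarrow> 'b::finite \<Rightarrow> real) \<Rightarrow> ('a \<Rightarrow> 'b \<Rightarrow> real) \<Rightarrow> real" where
  "frob A B = (\<Sum>i\<in>UNIV. \<Sum>j\<in>UNIV. A i j * B i j)"

definition quad_form :: "('s::finite \<Rightarrow> 's \<Rightarrow> real) \<Rightarrow> ('s \<Rightarrow> real) \<Rightarrow> real" where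
  "quad_form M x = (\<Sum>p\<in>UNIV. \<Sum>q\<in>UNIV. x p * M p q * x q)"

definition psd :: "('s::finite \<Rightarrow> 's \<Rightarrow> real) \<Rightarrow> bool" where
  "psd M \<longleftrightarrow> (\<forall>x. quad_form M x \<ge> 0)"

definition mahal_norm :: "('s::finite \<Rightarrow> 's \<Rightarrow> real) \<Rightarrow> ('s \<Rightarrow> real) \<Rightarrow> real" where
  "mahal_norm M x = sqrt (quad_form M x)"

text \<open>D_h = diag(h); matrix products with diagonal matrices written entrywise.\<close>
definition M1 :: "('n::finite \<Rightarrow> real) \<Rightarrow> ('s::finite \<Rightarrow> 'n \<Rightarrow> 'n \<Rightarrow> real) \<Rightarrow> 's \<Rightarrow> 's \<Rightarrow> real" where
  "M1 h C p q = frob (\<lambda>i j. h i * C p i j) (\<lambda>i j. C q i j * h j)"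

definition M2 :: "('n::finite \<Rightarrow> real) \<Rightarrow> ('s::finite \<Rightarrow> 'n \<Rightarrow> 'd::finite \<Rightarrow> real) \<Rightarrow> 's \<Rightarrow> 's \<Rightarrow> real" where
  "M2 h A p q = frob (\<lambda>i k. sqrt (h i) * A p i k) (\<lambda>i k. sqrt (h i) * A q i k)"

definition Malpha :: "real \<Rightarrow> ('n::finite \<Rightarrow> real) \<Rightarrow> ('s::finite \<Rightarrow> 'n \<Rightarrow> 'n \<Rightarrow> real)
    \<Rightarrow> ('s \<Rightarrow> 'n \<Rightarrow> 'd::finite \<Rightarrow> real) \<Rightarrow> 's \<Rightarrow> 's \<Rightarrow> real" where
  "Malpha \<alpha> h C A p q = \<alpha> * M1 h C p q + (1 - \<alpha>) * M2 h A p q"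

definition Ctil :: "('s::finite \<Rightarrow> 'n \<Rightarrow> 'n \<Rightarrow> real) \<Rightarrow> ('s \<Rightarrow> real) \<Rightarrow> 'n \<Rightarrow> 'n \<Rightarrow> real" where
  "Ctil C w = (\<lambda>i j. \<Sum>s\<in>UNIV. w s * C s i j)"

definition Atil :: "('s::finite \<Rightarrow> 'n \<Rightarrow> 'd \<Rightarrow> real) \<Rightarrow> ('s \<Rightarrow> real) \<Rightarrow> 'n \<Rightarrow> 'd \<Rightarrow> real" where
  "Atil A w = (\<lambda>i k. \<Sum>s\<in>UNIV. w s * A s i k)"

end

theory Submission imports Defs begin

lemma gram2:
  fixes x :: "'s::finite \<Rightarrow> real" and g :: "'i::finite \<Rightarrow> 'j::finite \<Rightarrow> real"
  shows "(\<Sum>p\<in>UNIV. \<Sum>q\<in>UNIV. x p * (\<Sum>i\<in>UNIV. \<Sum>j\<in>UNIV. g i j * f p i j * f q i j) * x q)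
       = (\<Sum>i\<in>UNIV. \<Sum>j\<in>UNIV. g i j * (\<Sum>p\<in>UNIV. x p * f p i j)\<^sup>2)"
proof -
  have "(\<Sum>i\<in>UNIV. \<Sum>j\<in>UNIV. g i j * (\<Sum>p\<in>UNIV. x p * f p i j)\<^sup>2)
      = (\<Sum>i\<in>UNIV. \<Sum>j\<in>UNIV. \<Sum>p\<in>UNIV. \<Sum>q\<in>UNIV. x p * (g i j * f p i j * f q i j) * x q)"
    by (simp add: power2_eq_square sum_product sum_distrib_left mult_ac)
  also have "\<dots> = (\<Sum>p\<in>UNIV. \<Sum>q\<in>UNIV. \<Sum>i\<in>UNIV. \<Sum>j\<in>UNIV. x p * (g i j * f p i j * f q i j) * x q)"
  proof -
    let ?F = "\<lambda>i j p q. x p * (g i j * f p i j * f q i j) * x q"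
    have s1: "(\<Sum>i\<in>UNIV. \<Sum>j\<in>UNIV. \<Sum>p\<in>UNIV. \<Sum>q\<in>UNIV. ?F i j p q) = (\<Sum>i\<in>UNIV. \<Sum>p\<in>UNIV. \<Sum>j\<in>UNIV. \<Sum>q\<in>UNIV. ?F i j p q)"
      by (rule sum.cong[OF refl], rule sum.swap)
    have s2: "\<dots> = (\<Sum>p\<in>UNIV. \<Sum>i\<in>UNIV. \<Sum>j\<in>UNIV. \<Sum>q\<in>UNIV. ?F i j p q)"
      by (rule sum.swap)
    have s3: "(\<Sum>i\<in>UNIV. \<Sum>j\<in>UNIV. \<Sum>q\<in>UNIV. ?F i j p q) = (\<Sum>q\<in>UNIV. \<Sum>i\<in>UNIV. \<Sum>j\<in>UNIV. ?F i j p q)" for p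
    proof -
      have "(\<Sum>i\<in>UNIV. \<Sum>j\<in>UNIV. \<Sum>q\<in>UNIV. ?F i j p q) = (\<Sum>i\<in>UNIV. \<Sum>q\<in>UNIV. \<Sum>j\<in>UNIV. ?F i j p q)"
        by (rule sum.cong[OF refl], rule sum.swap)
      also have "\<dots> = (\<Sum>q\<in>UNIV. \<Sum>i\<in>UNIV. \<Sum>j\<in>UNIV. ?F i j p q)"
        by (rule sum.swap)
      finally show ?thesis .
    qed
    show ?thesis using s1 s2 s3 by simp
  qed
  also have "\<dots> = (\<Sum>p\<in>UNIV. \<Sum>q\<in>UNIV. x p * (\<Sum>i\<in>UNIV. \<Sum>j\<in>UNIV. g i j * f p i j * f q i j) * x q)"
    by (simp add: sum_distrib_left sum_distrib_right)
  finally show ?thesis by simp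
qed

lemma qM1: "quad_form (M1 h C) x = (\<Sum>i\<in>UNIV. \<Sum>j\<in>UNIV. (h i * h j) * (\<Sum>p\<in>UNIV. x p * C p i j)\<^sup>2)"
  unfolding quad_form_def M1_def frob_def gram2[symmetric]
  by (simp add: mult_ac)

lemma qM2: assumes "\<forall>i. h i \<ge> 0"
  shows "quad_form (M2 h A) x = (\<Sum>i\<in>UNIV. \<Sum>j\<in>UNIV. h i * (\<Sum>p\<in>UNIV. x p * A p i j)\<^sup>2)"
proof -
  have e: "sqrt (h i) * a * (sqrt (h i) * b) = h i * a * b" for i a b
  proof -
    have "sqrt (h i) * a * (sqrt (h i) * b) = (sqrt (h i) * sqrt (h i)) * a * b" by (simp only: mult_ac)
    also have "sqrt (h i) * sqrt (h i) = h i" using assms by simp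
    finally show ?thesis .
  qed
  show ?thesis unfolding quad_form_def M2_def frob_def gram2[symmetric] e ..
qed

lemma qMa: "quad_form (Malpha a h C A) x = a * quad_form (M1 h C) x + (1 - a) * quad_form (M2 h A) x"
proof -
  have e: "x p * Malpha a h C A p q * x q = a * (x p * M1 h C p q * x q) + (1 - a) * (x p * M2 h A p q * x q)" for p q
    unfolding Malpha_def by (simp add: algebra_simps)
  show ?thesis unfolding quad_form_def e by (simp add: sum.distrib sum_distrib_left)
qed

lemma diag_coupling:
  assumes "h \<in> prob_simplex"
  shows "(\<lambda>i j. if i = j then h i else 0) \<in> couplings h"
  using assms unfolding prob_simplex_def couplings_def by (auto simp: if_distrib cong: if_cong)

lemma cost_diag:
  "fgw_cost a CX AX CY AY (\<lambda>i j. if i = j then h i else 0) =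
    (1 - a) * (\<Sum>i\<in>UNIV. h i * (\<Sum>k\<in>UNIV. (AX i k - AY i k)\<^sup>2))
    + a * (\<Sum>i\<in>UNIV. \<Sum>j\<in>UNIV. (h i * h j) * (CX i j - CY i j)\<^sup>2)"
proof -
  have m: "\<And>x c (y::real). x * (if c then y else 0) = (if c then x * y else 0)" by simp
  have m2: "\<And>x c (y::real). (if c then y else 0) * x = (if c then y * x else 0)" by simp
  have inner: "(\<Sum>k\<in>UNIV. \<Sum>l\<in>UNIV. (CX i j - CY k l)\<^sup>2 * (if i = k then h i else 0) * (if j = l then h j else 0))
     = (h i * h j) * (CX i j - CY i j)\<^sup>2" for i j
  proof -
    have "(\<Sum>k\<in>UNIV. \<Sum>l\<in>UNIV. (CX i j - CY k l)\<^sup>2 * (if i = k then h i else 0) * (if j = l then h j else 0))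
      = (\<Sum>k\<in>UNIV. (if i = k then h i else 0) * (\<Sum>l\<in>UNIV. (if j = l then h j else 0) * (CX i j - CY k l)\<^sup>2))"
      by (simp add: sum_distrib_left mult_ac)
    also have "\<dots> = h i * (h j * (CX i j - CY i j)\<^sup>2)"
      by (simp add: m2)
    finally show ?thesis by simp
  qed
  show ?thesis unfolding fgw_cost_def inner by (simp add: m m2 mult_ac)
qed

lemma cost_nonneg:
  assumes "0 \<le> a" "a \<le> 1" "T \<in> couplings h"
  shows "0 \<le> fgw_cost a CX AX CY AY T"
  using assms unfolding fgw_cost_def couplings_def
  by (intro add_nonneg_nonneg mult_nonneg_nonneg sum_nonneg) auto

theorem proposition4:
  fixes \<alpha> :: real
    and C :: "'s::finite \<Rightarrow> 'n::finite \<Rightarrow> 'n \<Rightarrow> real"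
    and A :: "'s \<Rightarrow> 'n \<Rightarrow> 'd::finite \<Rightarrow> real"
    and h :: "'n \<Rightarrow> real"
  assumes "0 < \<alpha>" and "\<alpha> < 1"
    and "\<forall>s i j. C s i j = C s j i"
    and "h \<in> prob_simplex"
  shows "psd (M1 h C) \<and> psd (M2 h A) \<and> psd (Malpha \<alpha> h C A) \<and>
         (\<forall>w1 \<in> prob_simplex. \<forall>w2 \<in> prob_simplex.
            FGW2 \<alpha> (Ctil C w1) (Atil A w1) (Ctil C w2) (Atil A w2) h
              \<le> mahal_norm (Malpha \<alpha> h C A) (w1 - w2))"
proof -
  have hnn: "\<forall>i. h i \<ge> 0" using assms(4) unfolding prob_simplex_def by auto
  have q1: "quad_form (M1 h C) x \<ge> 0" for x
    unfolding qM1 using hnn by (intro sum_nonneg mult_nonneg_nonneg) auto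
  have q2: "quad_form (M2 h A) x \<ge> 0" for x
    unfolding qM2[OF hnn] using hnn by (intro sum_nonneg mult_nonneg_nonneg) auto
  have qa: "quad_form (Malpha \<alpha> h C A) x \<ge> 0" for x
    unfolding qMa using q1[of x] q2[of x] assms(1,2) by (intro add_nonneg_nonneg mult_nonneg_nonneg) auto
  have main: "FGW2 \<alpha> (Ctil C w1) (Atil A w1) (Ctil C w2) (Atil A w2) h
              \<le> mahal_norm (Malpha \<alpha> h C A) (w1 - w2)" for w1 w2
  proof -
    define x where "x = w1 - w2"
    define T where "T = (\<lambda>i j. if i = j then h i else (0::real))"
    have dA: "Atil A w1 i k - Atil A w2 i k = (\<Sum>p\<in>UNIV. x p * A p i k)" for i k
      unfolding Atil_def x_def by (simp add: sum_subtractf[symmetric] left_diff_distrib)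
    have dC: "Ctil C w1 i j - Ctil C w2 i j = (\<Sum>p\<in>UNIV. x p * C p i j)" for i j
      unfolding Ctil_def x_def by (simp add: sum_subtractf[symmetric] left_diff_distrib)
    have cT: "fgw_cost \<alpha> (Ctil C w1) (Atil A w1) (Ctil C w2) (Atil A w2) T = quad_form (Malpha \<alpha> h C A) x"
      unfolding T_def cost_diag qMa qM1 qM2[OF hnn] dA dC
      by (simp add: sum_distrib_left)
    have Tc: "T \<in> couplings h" unfolding T_def by (rule diag_coupling[OF assms(4)])
    have bdd: "bdd_below (fgw_cost \<alpha> (Ctil C w1) (Atil A w1) (Ctil C w2) (Atil A w2) ` couplings h)"
    proof (rule bdd_belowI[where m=0])
      fix y assume "y \<in> fgw_cost \<alpha> (Ctil C w1) (Atil A w1) (Ctil C w2) (Atil A w2) ` couplings h"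
      then obtain T' where "T' \<in> couplings h" "y = fgw_cost \<alpha> (Ctil C w1) (Atil A w1) (Ctil C w2) (Atil A w2) T'" by blast
      then show "0 \<le> y" using cost_nonneg[of \<alpha> T' h] assms(1,2) by simp
    qed
    have "Inf (fgw_cost \<alpha> (Ctil C w1) (Atil A w1) (Ctil C w2) (Atil A w2) ` couplings h)
        \<le> fgw_cost \<alpha> (Ctil C w1) (Atil A w1) (Ctil C w2) (Atil A w2) T"
      by (rule cInf_lower[OF imageI[OF Tc] bdd])
    then show ?thesis unfolding FGW2_def mahal_norm_def cT x_def[symmetric] by simp
  qed
  show ?thesis unfolding psd_def using q1 q2 qa main by blast
qed

end
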